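(* Let $n\ge1$ and $K\in\mathcal S_n\setminus\{\emptyset,\mathbb R^n\}$. Then \[ \mathrm{Outrad}(K)+\mathrm{Inrad}(K^c)=1. \] Moreover, there is a unique point $x$ with $K\subseteq B(x,\mathrm{Outrad}(K))$, and it is also the unique point with $B(x,\mathrm{Inrad}(K^c))\subseteq K^c$; i.e., the smallest ball containing $K$ and the largest ball contained in $K^c$ are unique, concentric, and $c$-dual to one another.
   Context: $B(x,r)$ is the closed Euclidean ball. For $A\subseteq\mathbb R^n$, $A^c=\bigcap_{x\in A}B(x,1)$. $\mathcal S_n$ is the class of all sets of the form $\bigcap_{x\in A}B(x,1)$, $A\subseteq\mathbb R^n$. $\mathrm{Outrad}(K)=\min\{R:\exists x,\ K\subseteq B(x,R)\}$ and $\mathrm{Inrad}(K)=\max\{r:\exists x,\ B(x,r)\subseteq K\}$. *)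

theory Defs
  imports "HOL-Analysis.Analysis"
begin

text \<open>The c-dual: A^c = intersection of closed unit balls centred at points of A
  (for A = {} this is the whole space).\<close>
definition cdual :: "'a::euclidean_space set \<Rightarrow> 'a set" where
  "cdual A = (\<Inter>x\<in>A. cball x 1)"

definition S_class :: "'a::euclidean_space set set" where
  "S_class = {K. \<exists>A. K = cdual A}"

definition Outrad :: "'a::euclidean_space set \<Rightarrow> real" where
  "Outrad K = Inf {R. \<exists>x. K \<subseteq> cball x R}"

definition Inrad :: "'a::euclidean_space set \<Rightarrow> real" where
  "Inrad K = Sup {r. \<exists>x. cball x r \<subseteq> K}"

end

theory Submission
  imports Defs
begin

lemma para:
  fixes u v :: "'a::real_inner"
  shows "(norm ((u + v) /\<^sub>R 2))\<^sup>2 = ((norm u)\<^sup>2 + (norm v)\<^sup>2) / 2 - (norm (u - v))\<^sup>2 / 4"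
  by (simp add: power2_norm_eq_inner inner_add_left inner_add_right inner_diff_left
      inner_diff_right inner_commute algebra_simps) (simp add: field_simps)

lemma mid_shrink:
  fixes K :: "'a::euclidean_space set"
  assumes "K \<subseteq> cball y R" "K \<subseteq> cball z R" "y \<noteq> z" "K \<noteq> {}"
  shows "\<exists>R'<R. K \<subseteq> cball ((y + z) /\<^sub>R 2) R'"
proof -
  define d where "d = norm (y - z)"
  have d: "d > 0" using assms(3) by (simp add: d_def)
  have R0: "R \<ge> 0" using assms(1,4) by (auto intro: order_trans[OF zero_le_dist])
  define R' where "R' = sqrt (R\<^sup>2 - d\<^sup>2 / 4)"
  have key: "dist ((y + z) /\<^sub>R 2) w \<le> R'" if w: "w \<in> K" for w
  proof -
    have h1: "norm (y - w) \<le> R" "norm (z - w) \<le> R"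
      using assms(1,2) w by (auto simp: dist_norm norm_minus_commute)
    have e: "(y + z) /\<^sub>R 2 - w = ((y - w) + (z - w)) /\<^sub>R 2"
      by (simp add: algebra_simps flip: scaleR_2)
    have "(norm ((y + z) /\<^sub>R 2 - w))\<^sup>2 = ((norm (y - w))\<^sup>2 + (norm (z - w))\<^sup>2) / 2 - d\<^sup>2 / 4"
      unfolding e para d_def by simp
    also have "\<dots> \<le> R\<^sup>2 - d\<^sup>2 / 4"
      using h1 power_mono[OF h1(1) norm_ge_zero, of 2] power_mono[OF h1(2) norm_ge_zero, of 2] by (simp add: field_simps)
    finally have "(norm ((y + z) /\<^sub>R 2 - w))\<^sup>2 \<le> R\<^sup>2 - d\<^sup>2 / 4" .
    then have "sqrt ((norm ((y + z) /\<^sub>R 2 - w))\<^sup>2) \<le> R'"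
      unfolding R'_def using real_sqrt_le_mono by blast
    then show ?thesis by (simp add: dist_norm)
  qed
  have "R' < R"
  proof -
    have "R\<^sup>2 - d\<^sup>2 / 4 < R\<^sup>2" using d by simp
    then have "R' < sqrt (R\<^sup>2)" unfolding R'_def by (rule real_sqrt_less_mono)
    then show ?thesis using R0 by simp
  qed
  then show ?thesis using key by (auto simp: subset_iff)
qed

theorem lemma3p2:
  fixes K :: "'a::euclidean_space set"
  assumes "K \<in> S_class" and "K \<noteq> {}" and "K \<noteq> UNIV"
  shows "Outrad K + Inrad (cdual K) = 1 \<and>
         (\<exists>x. (\<forall>y. K \<subseteq> cball y (Outrad K) \<longleftrightarrow> y = x) \<and>
              (\<forall>y. cball y (Inrad (cdual K)) \<subseteq> cdual K \<longleftrightarrow> y = x))"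
proof -
  obtain A where KA: "K = cdual A" using assms(1) by (auto simp: S_class_def)
  have "A \<noteq> {}" using assms(3) KA by (auto simp: cdual_def)
  then obtain a where a: "a \<in> A" by blast
  have Ka: "K \<subseteq> cball a 1" using KA a by (auto simp: cdual_def)
  obtain w0 where w0: "w0 \<in> K" using assms(2) by blast
  define S where "S = {R. \<exists>x. K \<subseteq> cball x R}"
  have S1: "1 \<in> S" using Ka by (auto simp: S_def)
  have Snn: "R \<ge> 0" if RS: "R \<in> S" for R
  proof -
    obtain x where "K \<subseteq> cball x R" using RS by (auto simp: S_def)
    then have "dist x w0 \<le> R" using w0 by auto
    then show ?thesis using zero_le_dist[of x w0] by linarith
  qed
  have bddS: "bdd_below S" using Snn by (auto simp: bdd_below_def)
  define g where "g y = Sup ((\<lambda>w. dist y w) ` K)" for y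
  have bdd: "bdd_above ((\<lambda>w. dist y w) ` K)" for y
  proof -
    have "dist y w \<le> dist y a + 1" if "w \<in> K" for w
      using Ka that dist_triangle[of y w a] by (auto simp: dist_commute)
    then show ?thesis by (auto simp: bdd_above_def)
  qed
  have gup: "dist y w \<le> g y" if "w \<in> K" for y w
    unfolding g_def using bdd that by (rule cSUP_upper2) simp
  have gle: "g y \<le> R" if "K \<subseteq> cball y R" for y R
    unfolding g_def using that assms(2) by (intro cSUP_least) auto
  have gin: "K \<subseteq> cball y (g y)" for y using gup by auto
  have glip: "g y \<le> g z + dist y z" for y z
  proof -
    have "dist y w \<le> g z + dist y z" if "w \<in> K" for w
      using gup[OF that, of z] dist_triangle[of y w z] by (simp add: dist_commute)
    then show ?thesis by (intro gle) auto
  qed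
  have "1-lipschitz_on UNIV g"
  proof (rule lipschitz_onI)
    fix y z :: 'a
    show "dist (g y) (g z) \<le> 1 * dist y z"
      using glip[of y z] glip[of z y] by (simp add: dist_real_def dist_commute abs_le_iff)
  qed simp
  then have cont: "continuous_on (cball a 2) g"
    by (meson lipschitz_on_continuous_on continuous_on_subset subset_UNIV)
  obtain x0 where x0: "x0 \<in> cball a 2" "\<And>y. y \<in> cball a 2 \<Longrightarrow> g x0 \<le> g y"
    using continuous_attains_inf[OF compact_cball _ cont] by fastforce
  have ga: "g a \<le> 1" using gle[OF Ka] .
  have out: "Outrad K = g x0"
    unfolding Outrad_def S_def[symmetric]
  proof (rule cInf_eq_minimum)
    show "g x0 \<in> S" using gin by (auto simp: S_def)
  next
    fix R assume "R \<in> S"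
    then obtain y where y: "K \<subseteq> cball y R" by (auto simp: S_def)
    show "g x0 \<le> R"
    proof (cases "y \<in> cball a 2")
      case True then show ?thesis using x0(2) gle[OF y] by fastforce
    next
      case False
      have "dist a w0 \<le> 1" using Ka w0 by auto
      then have "dist y w0 > 1" using False dist_triangle[of a y w0] by (auto simp: dist_commute)
      moreover have "dist y w0 \<le> R" using y w0 by auto
      moreover have "g x0 \<le> 1" using x0(2)[of a] ga by simp
      ultimately show ?thesis by simp
    qed
  qed
  define R where "R = Outrad K"
  have R1: "R \<le> 1" unfolding R_def Outrad_def using cInf_lower[OF S1 bddS] S_def by simp
  have R0: "R \<ge> 0" unfolding R_def out using gup[OF w0, of x0] zero_le_dist[of x0 w0] by linarith
  have Rlow: "R \<le> R'" if "K \<subseteq> cball y R'" for y R'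
    unfolding R_def Outrad_def S_def[symmetric] using that
    by (intro cInf_lower[OF _ bddS]) (auto simp: S_def)
  have xin: "K \<subseteq> cball x0 R" unfolding R_def out by (rule gin)
  have uniq: "K \<subseteq> cball y R \<longleftrightarrow> y = x0" for y
  proof
    assume y: "K \<subseteq> cball y R"
    show "y = x0"
    proof (rule ccontr)
      assume "y \<noteq> x0"
      then obtain R' where "R' < R" "K \<subseteq> cball ((y + x0) /\<^sub>R 2) R'"
        using mid_shrink[OF y xin _ assms(2)] by blast
      then show False using Rlow by fastforce
    qed
  qed (use xin in simp)
  have cd: "cball y r \<subseteq> cdual K \<longleftrightarrow> (\<forall>w\<in>K. dist y w + r \<le> 1 \<or> r < 0)" for y r
    by (auto simp: cdual_def cball_subset_cball_iff[symmetric])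
  have cd2: "cball y (1 - R) \<subseteq> cdual K \<longleftrightarrow> K \<subseteq> cball y R" for y
    unfolding cd using R1 by auto
  have inr: "Inrad (cdual K) = 1 - R"
    unfolding Inrad_def
  proof (rule cSup_eq_maximum)
    show "1 - R \<in> {r. \<exists>x. cball x r \<subseteq> cdual K}" using cd2 xin by blast
  next
    fix r assume "r \<in> {r. \<exists>x. cball x r \<subseteq> cdual K}"
    then obtain y where y: "cball y r \<subseteq> cdual K" by blast
    show "r \<le> 1 - R"
    proof (cases "r < 0")
      case True then show ?thesis using R1 by simp
    next
      case False
      then have "\<forall>w\<in>K. dist y w + r \<le> 1" using y cd by blast
      then have "K \<subseteq> cball y (1 - r)" by auto
      then show ?thesis using Rlow by fastforce
    qed
  qed
  show ?thesis
    unfolding R_def[symmetric] inr using uniq cd2 by auto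
qed

end
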